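(* Let $\Gamma$ be a $3$-saturated drawing. Then \[ \sum_{a\ge 6} a\,|\mathcal{C}_a| \;\ge\; \tau(B_4,L)+\tau(B_5,L)+\tau(A_3,L)+\tau(A_5,L)+5\,N(U_6). \]
   Context: Drawings are on the sphere: vertices are distinct points, edges (of a graph possibly with parallel edges, no loops) are Jordan arcs; any two edges share finitely many points, each a common endpoint or a proper crossing; no three edges cross at one point; no edge crosses itself; adjacent edges do not cross. A drawing is $3$-plane if every edge is crossed at most three times. A lens is a region bounded by exactly two parts of edges; a drawing is non-homotopic if every lens contains a crossing or vertex in its interior. An edge with $i$ crossings is split into $i+1$ edge-segments; an edge-segment is inner if both its endpoints are crossings and outer otherwise. The planarization replaces each crossing by a degree-$4$ vertex; the drawing is connected if its planarization is connected. Cells are the components of the sphere minus all vertices and edges; the boundary $\partial c$ of a cell is a cyclic sequence alternating between edge-segments and vertices/crossings. The size $\|c\|$ of a cell is the number of vertex incidences plus the number of edge-segment incidences along $\partial c$ (crossings not counted); $\mathcal{C}_a$ is the set of cells of size $a$. A drawing is filled if for every cell $c$ and distinct vertices $u\ne v$ on $\partial c$ there is an uncrossed edge $uv$ on $\partial c$. A drawing is $3$-saturated if it is $3$-plane, non-homotopic, connected, filled, and has at least three vertices. Cell types: $A_3$: three crossings and three inner edge-segments, no vertex. $A_4$: four crossings and four inner edge-segments. $B_4$: boundary $v$, outer segment, crossing, inner segment, crossing, outer segment. $B_5$: boundary $v$, outer segment, crossing, inner segment, crossing, inner segment, crossing, outer segment. $A_5$: five crossings and five inner segments. $U_6$: boundary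 $u$, uncrossed edge $uv$, $v$, outer segment, crossing, inner segment, crossing, outer segment (two vertices $u,v$), size $6$. $L$: any cell of size at least $6$. $N(T)$ is the number of cells of type $T$. Trails: a trail is a sequence $(c_1,\dots,c_\ell)$, $\ell\ge 2$, of cells such that (1) neither $c_1$ nor $c_\ell$ is of type $A_4$; (2) consecutive cells $c_i,c_{i+1}$ share an inner edge-segment; (3) each of $c_2,\dots,c_{\ell-1}$ is an $A_4$-cell whose two edge-segments shared with its neighbours are opposite on its boundary. A trail and its reversal are the same trail. $\tau(T,T')=\tau(T',T)$ is the number of trails whose end cells are of types $T$ and $T'$. *)

theory Defs
  imports Main
begin

text \<open>
Combinatorial encoding of a connected drawing on the sphere via its planarization,
given as a combinatorial map (rotation system) of genus 0.
Darts are half-edge-segments of the planarization; nodes are vertices or crossings.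
\<^item> dtail d : node at which dart d starts
\<^item> drev d  : the same edge-segment traversed in the opposite direction
\<^item> drot d  : next dart around the node dtail d in the (fixed) rotation order
\<^item> dverts  : the vertices of the drawing (the remaining nodes are crossings)
\<^item> dedges, dpath : the edges of the drawn graph; dpath e is the list of darts
  (edge-segments) traversed by e from one endpoint to the other.
\<close>

record ('n, 'd, 'e) drawing =
  darts  :: "'d set"
  dtail  :: "'d \<Rightarrow> 'n"
  drev   :: "'d \<Rightarrow> 'd"
  drot   :: "'d \<Rightarrow> 'd"
  dverts :: "'n set"
  dedges :: "'e set"
  dpath  :: "'e \<Rightarrow> 'd list"

definition dhead :: "('n,'d,'e) drawing \<Rightarrow> 'd \<Rightarrow> 'n" where
  "dhead G d = dtail G (drev G d)"

definition nodes :: "('n,'d,'e) drawing \<Rightarrow> 'n set" where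
  "nodes G = dtail G ` darts G"

definition crossings :: "('n,'d,'e) drawing \<Rightarrow> 'n set" where
  "crossings G = nodes G - dverts G"

definition darts_at :: "('n,'d,'e) drawing \<Rightarrow> 'n \<Rightarrow> 'd set" where
  "darts_at G x = {d \<in> darts G. dtail G d = x}"

text \<open>Face-traversal permutation: the dart following d on the boundary walk of its cell.\<close>
definition fphi :: "('n,'d,'e) drawing \<Rightarrow> 'd \<Rightarrow> 'd" where
  "fphi G d = drot G (drev G d)"

definition orbit :: "('a \<Rightarrow> 'a) \<Rightarrow> 'a \<Rightarrow> 'a set" where
  "orbit f x = {(f ^^ k) x | k. True}"

text \<open>Cells: the orbits of fphi; a cell is identified with the set of darts of its boundary walk.\<close>
definition cells :: "('n,'d,'e) drawing \<Rightarrow> 'd set set" where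
  "cells G = (\<lambda>d. orbit (fphi G) d) ` darts G"

definition connected_planarization :: "('n,'d,'e) drawing \<Rightarrow> bool" where
  "connected_planarization G \<longleftrightarrow>
     (\<forall>d\<in>darts G. \<forall>d'\<in>darts G.
        (d, d') \<in> ({(x, drev G x) | x. x \<in> darts G} \<union> {(x, drot G x) | x. x \<in> darts G})\<^sup>*)"

text \<open>A connected combinatorial map embedded in the sphere (Euler characteristic 2).\<close>
definition sphere_map :: "('n,'d,'e) drawing \<Rightarrow> bool" where
  "sphere_map G \<longleftrightarrow>
     finite (darts G) \<and> darts G \<noteq> {} \<and>
     bij_betw (drev G) (darts G) (darts G) \<and>
     (\<forall>d\<in>darts G. drev G (drev G d) = d \<and> drev G d \<noteq> d) \<and>
     bij_betw (drot G) (darts G) (darts G) \<and>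
     (\<forall>d\<in>darts G. dtail G (drot G d) = dtail G d) \<and>
     (\<forall>d\<in>darts G. \<forall>d'\<in>darts G. dtail G d = dtail G d' \<longrightarrow> (\<exists>k. (drot G ^^ k) d = d')) \<and>
     connected_planarization G \<and>
     card (nodes G) + card (cells G) = card (darts G) div 2 + 2"

definition walk_nodes :: "('n,'d,'e) drawing \<Rightarrow> 'd list \<Rightarrow> 'n list" where
  "walk_nodes G ws = map (dtail G) ws @ [dhead G (last ws)]"

definition rev_walk :: "('n,'d,'e) drawing \<Rightarrow> 'd list \<Rightarrow> 'd list" where
  "rev_walk G ws = rev (map (drev G) ws)"

text \<open>An edge runs from a vertex to a vertex through crossings, going straight
  (to the opposite dart in the rotation) at each crossing, and visits no node twice
  (no self-crossings, no loops).\<close>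
definition edge_walk :: "('n,'d,'e) drawing \<Rightarrow> 'd list \<Rightarrow> bool" where
  "edge_walk G ws \<longleftrightarrow>
     ws \<noteq> [] \<and> set ws \<subseteq> darts G \<and>
     dtail G (hd ws) \<in> dverts G \<and> dhead G (last ws) \<in> dverts G \<and>
     (\<forall>i. Suc i < length ws \<longrightarrow>
         dhead G (ws ! i) \<in> crossings G \<and>
         ws ! Suc i = drot G (drot G (drev G (ws ! i)))) \<and>
     distinct (walk_nodes G ws)"

definition edge_darts :: "('n,'d,'e) drawing \<Rightarrow> 'e \<Rightarrow> 'd set" where
  "edge_darts G e = set (dpath G e) \<union> drev G ` set (dpath G e)"

definition edge_ends :: "('n,'d,'e) drawing \<Rightarrow> 'e \<Rightarrow> 'n set" where
  "edge_ends G e = {dtail G (hd (dpath G e)), dhead G (last (dpath G e))}"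

definition edge_nodes :: "('n,'d,'e) drawing \<Rightarrow> 'e \<Rightarrow> 'n set" where
  "edge_nodes G e = set (walk_nodes G (dpath G e))"

definition drawing :: "('n,'d,'e) drawing \<Rightarrow> bool" where
  "drawing G \<longleftrightarrow>
     sphere_map G \<and>
     dverts G \<subseteq> nodes G \<and>
     (\<forall>x\<in>crossings G. card (darts_at G x) = 4) \<and>
     finite (dedges G) \<and>
     (\<forall>e\<in>dedges G. edge_walk G (dpath G e)) \<and>
     (\<forall>d\<in>darts G. \<exists>!e. e \<in> dedges G \<and> d \<in> edge_darts G e) \<and>
     (\<forall>e1\<in>dedges G. \<forall>e2\<in>dedges G.
        e1 \<noteq> e2 \<and> edge_nodes G e1 \<inter> edge_nodes G e2 \<inter> crossings G \<noteq> {}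
        \<longrightarrow> edge_ends G e1 \<inter> edge_ends G e2 = {})"

definition three_plane :: "('n,'d,'e) drawing \<Rightarrow> bool" where
  "three_plane G \<longleftrightarrow> (\<forall>e\<in>dedges G. length (dpath G e) - 1 \<le> 3)"

definition edge_part :: "('n,'d,'e) drawing \<Rightarrow> 'd list \<Rightarrow> bool" where
  "edge_part G P \<longleftrightarrow> P \<noteq> [] \<and>
     (\<exists>e\<in>dedges G. \<exists>xs ys. dpath G e = xs @ P @ ys \<or> rev_walk G (dpath G e) = xs @ P @ ys)"

definition lens_cycle :: "('n,'d,'e) drawing \<Rightarrow> 'd list \<Rightarrow> bool" where
  "lens_cycle G W \<longleftrightarrow>
     (\<exists>P Q. edge_part G P \<and> edge_part G Q \<and>
        dtail G (hd P) = dtail G (hd Q) \<and> dhead G (last P) = dhead G (last Q) \<and>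
        set P \<inter> (set Q \<union> drev G ` set Q) = {} \<and>
        W = P @ rev_walk G Q \<and> distinct (map (dtail G) W))"

text \<open>Darts at the nodes of a closed walk W lying strictly on one (the same) side of W:
  at the node where W leaves along W!i, those strictly between W!i and the reverse
  of the incoming dart, in rotation order.\<close>
definition side_darts :: "('n,'d,'e) drawing \<Rightarrow> 'd list \<Rightarrow> 'd set" where
  "side_darts G W = {d. \<exists>i<length W. \<exists>k>0. d = (drot G ^^ k) (W ! i) \<and>
      (\<forall>j\<in>{1..k}. (drot G ^^ j) (W ! i) \<noteq> drev G (W ! ((i + length W - 1) mod length W)))}"

text \<open>All darts of the planarization in the region on that side of W.\<close>
inductive_set side_region :: "('n,'d,'e) drawing \<Rightarrow> 'd list \<Rightarrow> 'd set"
  for G :: "('n,'d,'e) drawing" and W :: "'d list" where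
  base: "d \<in> side_darts G W \<Longrightarrow> d \<in> side_region G W"
| rev: "d \<in> side_region G W \<Longrightarrow> drev G d \<in> side_region G W"
| rot: "d \<in> side_region G W \<Longrightarrow> dtail G d \<notin> set (map (dtail G) W) \<Longrightarrow>
        drot G d \<in> side_region G W"

definition side_has_node :: "('n,'d,'e) drawing \<Rightarrow> 'd list \<Rightarrow> bool" where
  "side_has_node G W \<longleftrightarrow> (\<exists>d\<in>side_region G W. dtail G d \<notin> set (map (dtail G) W))"

text \<open>Non-homotopic: both regions bounded by any lens boundary contain a node in their interior.\<close>
definition non_homotopic :: "('n,'d,'e) drawing \<Rightarrow> bool" where
  "non_homotopic G \<longleftrightarrow>
     (\<forall>W. lens_cycle G W \<longrightarrow> side_has_node G W \<and> side_has_node G (rev_walk G W))"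

definition uncrossed :: "('n,'d,'e) drawing \<Rightarrow> 'e \<Rightarrow> bool" where
  "uncrossed G e \<longleftrightarrow> length (dpath G e) = 1"

definition filled :: "('n,'d,'e) drawing \<Rightarrow> bool" where
  "filled G \<longleftrightarrow>
     (\<forall>c\<in>cells G. \<forall>u\<in>dverts G. \<forall>v\<in>dverts G.
        u \<noteq> v \<and> u \<in> dtail G ` c \<and> v \<in> dtail G ` c \<longrightarrow>
        (\<exists>e\<in>dedges G. uncrossed G e \<and> edge_ends G e = {u, v} \<and>
           (\<exists>d\<in>set (dpath G e). d \<in> c \<or> drev G d \<in> c)))"

definition three_saturated :: "('n,'d,'e) drawing \<Rightarrow> bool" where
  "three_saturated G \<longleftrightarrow>
     drawing G \<and> three_plane G \<and> non_homotopic G \<and> connected_planarization G \<and>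
     filled G \<and> card (dverts G) \<ge> 3"

text \<open>Size of a cell: edge-segment incidences plus vertex incidences along its boundary.\<close>
definition csize :: "('n,'d,'e) drawing \<Rightarrow> 'd set \<Rightarrow> nat" where
  "csize G c = card c + card {d \<in> c. dtail G d \<in> dverts G}"

definition cells_of_size :: "('n,'d,'e) drawing \<Rightarrow> nat \<Rightarrow> 'd set set" where
  "cells_of_size G a = {c \<in> cells G. csize G c = a}"

definition nvert :: "('n,'d,'e) drawing \<Rightarrow> 'd set \<Rightarrow> nat" where
  "nvert G c = card {d \<in> c. dtail G d \<in> dverts G}"

definition inner_seg :: "('n,'d,'e) drawing \<Rightarrow> 'd \<Rightarrow> bool" where
  "inner_seg G d \<longleftrightarrow> dtail G d \<in> crossings G \<and> dhead G d \<in> crossings G"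

definition typeA :: "nat \<Rightarrow> ('n,'d,'e) drawing \<Rightarrow> 'd set \<Rightarrow> bool" where
  "typeA k G c \<longleftrightarrow> card c = k \<and> (\<forall>d\<in>c. dtail G d \<in> crossings G)"

abbreviation "A3 \<equiv> typeA 3"
abbreviation "A4 \<equiv> typeA 4"
abbreviation "A5 \<equiv> typeA 5"

definition B4 :: "('n,'d,'e) drawing \<Rightarrow> 'd set \<Rightarrow> bool" where
  "B4 G c \<longleftrightarrow> card c = 3 \<and> nvert G c = 1"

definition B5 :: "('n,'d,'e) drawing \<Rightarrow> 'd set \<Rightarrow> bool" where
  "B5 G c \<longleftrightarrow> card c = 4 \<and> nvert G c = 1"

definition U6 :: "('n,'d,'e) drawing \<Rightarrow> 'd set \<Rightarrow> bool" where
  "U6 G c \<longleftrightarrow> card c = 4 \<and> nvert G c = 2 \<and>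
     (\<exists>d\<in>c. dtail G d \<in> dverts G \<and> dhead G d \<in> dverts G \<and>
        (\<exists>e\<in>dedges G. uncrossed G e \<and> (dpath G e = [d] \<or> dpath G e = [drev G d])))"

definition Lc :: "('n,'d,'e) drawing \<Rightarrow> 'd set \<Rightarrow> bool" where
  "Lc G c \<longleftrightarrow> csize G c \<ge> 6"

definition Ncount :: "('n,'d,'e) drawing \<Rightarrow> (('n,'d,'e) drawing \<Rightarrow> 'd set \<Rightarrow> bool) \<Rightarrow> nat" where
  "Ncount G T = card {c \<in> cells G. T G c}"

text \<open>Trails: sequences of cells; ds!i is a dart of an inner edge-segment shared by
  cs!i and cs!(i+1) (on the boundary of cs!i, its reverse on that of cs!(i+1)).\<close>
definition trail :: "('n,'d,'e) drawing \<Rightarrow> 'd set list \<Rightarrow> bool" where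
  "trail G cs \<longleftrightarrow>
     length cs \<ge> 2 \<and> set cs \<subseteq> cells G \<and>
     \<not> A4 G (hd cs) \<and> \<not> A4 G (last cs) \<and>
     (\<exists>ds. length ds = length cs - 1 \<and>
        (\<forall>i<length ds. ds ! i \<in> cs ! i \<and> drev G (ds ! i) \<in> cs ! Suc i \<and> inner_seg G (ds ! i)) \<and>
        (\<forall>i. 0 < i \<and> i < length cs - 1 \<longrightarrow>
            A4 G (cs ! i) \<and> ds ! i = fphi G (fphi G (drev G (ds ! (i - 1))))))"

text \<open>Number of trails (a trail identified with its reversal) with end cells of types T and T'.\<close>
definition tau :: "('n,'d,'e) drawing \<Rightarrow> (('n,'d,'e) drawing \<Rightarrow> 'd set \<Rightarrow> bool)
                    \<Rightarrow> (('n,'d,'e) drawing \<Rightarrow> 'd set \<Rightarrow> bool) \<Rightarrow> nat" where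
  "tau G T T' = card {{cs, rev cs} | cs. trail G cs \<and>
      ((T G (hd cs) \<and> T' G (last cs)) \<or> (T' G (hd cs) \<and> T G (last cs)))}"

end

theory Submission
  imports Defs
begin


lemma funpow_in: "f ` S \<subseteq> S \<Longrightarrow> x \<in> S \<Longrightarrow> (f^^k) x \<in> S"
  by (induction k) auto

lemma inj_on_funpow': "inj_on f S \<Longrightarrow> f ` S \<subseteq> S \<Longrightarrow> inj_on (f^^k) S"
proof (induction k)
  case 0 then show ?case by simp
next
  case (Suc k)
  have "inj_on (f^^k) (f ` S)" using Suc inj_on_subset by blast
  then have "inj_on ((f^^k) \<circ> f) S" using Suc.prems comp_inj_on by blast
  then show ?case by (simp add: funpow_Suc_right comp_def del: funpow.simps)
qed

lemma funpow_cancel: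
  assumes "inj_on f S" "f ` S \<subseteq> S" "x \<in> S" "i < j" "(f^^i) x = (f^^j) x"
  shows "(f^^(j-i)) x = x"
proof -
  have e: "i + (j - i) = j" using assms(4) by simp
  have "(f^^(i + (j-i))) x = (f^^i) ((f^^(j-i)) x)" by (simp only: funpow_add comp_apply)
  then have eq: "(f^^i) ((f^^(j-i)) x) = (f^^i) x" using assms(5) e by simp
  have inS: "(f^^(j-i)) x \<in> S" by (rule funpow_in[OF assms(2,3)])
  show ?thesis by (rule inj_onD[OF inj_on_funpow'[OF assms(1,2)] eq inS assms(3)])
qed

lemma periodic_ex:
  assumes "finite S" "inj_on f S" "f ` S \<subseteq> S" "x \<in> S"
  shows "\<exists>p>0. (f^^p) x = x"
proof -
  let ?h = "\<lambda>k. (f^^k) x"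
  have "\<not> inj_on ?h {..card S}"
  proof
    assume "inj_on ?h {..card S}"
    moreover have "?h ` {..card S} \<subseteq> S" using funpow_in[OF assms(3,4)] by blast
    ultimately have "card {..card S} \<le> card S" using card_inj_on_le[OF _ _ assms(1)] by blast
    then show False by simp
  qed
  then obtain i j where ij: "i \<noteq> j" "?h i = ?h j" unfolding inj_on_def by blast
  show ?thesis
  proof (cases "i < j")
    case True
    then show ?thesis using funpow_cancel[OF assms(2,3,4) True] ij by (intro exI[of _ "j-i"]) auto
  next
    case False
    then have "j < i" using ij by simp
    then show ?thesis using funpow_cancel[OF assms(2,3,4) \<open>j<i\<close>] ij by (intro exI[of _ "i-j"]) auto
  qed
qed

lemma periodic_mult: "(f^^p) x = x \<Longrightarrow> (f^^(p*n)) x = x"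
proof (induction n)
  case 0 then show ?case by simp
next
  case (Suc n)
  have "(f^^(p*Suc n)) x = (f^^p) ((f^^(p*n)) x)" by (simp add: funpow_add)
  then show ?case using Suc by simp
qed

lemma periodic_mod: "(f^^p) x = x \<Longrightarrow> (f^^k) x = (f^^(k mod p)) x"
proof -
  assume a: "(f^^p) x = x"
  have "(f^^k) x = (f^^(k mod p + p * (k div p))) x" by simp
  also have "\<dots> = (f^^(k mod p)) ((f^^(p * (k div p))) x)" by (simp only: funpow_add comp_apply)
  also have "\<dots> = (f^^(k mod p)) x" using periodic_mult[OF a] by simp
  finally show ?thesis .
qed

lemma orbit_periodic_subset:
  "(f^^p) x = x \<Longrightarrow> 0 < p \<Longrightarrow> orbit f x \<subseteq> (\<lambda>k. (f^^k) x) ` {..<p}"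
  unfolding orbit_def using periodic_mod by fastforce

lemma orbit_card_le:
  assumes "(f^^p) x = x" "0 < p" shows "card (orbit f x) \<le> p"
proof -
  have "card (orbit f x) \<le> card ((\<lambda>k. (f^^k) x) ` {..<p})"
    using orbit_periodic_subset[OF assms] by (intro card_mono) auto
  also have "\<dots> \<le> p" using card_image_le[of "{..<p}"] by simp
  finally show ?thesis .
qed

lemma orbit_self: "x \<in> orbit f x"
  unfolding orbit_def by (auto intro: exI[of _ 0])

lemma orbit_step: "y \<in> orbit f x \<Longrightarrow> f y \<in> orbit f x"
proof -
  assume "y \<in> orbit f x"
  then obtain k where "y = (f^^k) x" unfolding orbit_def by blast
  then have "f y = (f^^(Suc k)) x" by simp
  then show ?thesis unfolding orbit_def by blast
qed

lemma orbit_trans: "y \<in> orbit f x \<Longrightarrow> orbit f y \<subseteq> orbit f x"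
proof
  fix z assume y: "y \<in> orbit f x" and z: "z \<in> orbit f y"
  obtain k where k: "y = (f^^k) x" using y unfolding orbit_def by blast
  obtain m where m: "z = (f^^m) y" using z unfolding orbit_def by blast
  have "z = (f^^(m+k)) x" by (simp add: k m funpow_add)
  then show "z \<in> orbit f x" unfolding orbit_def by blast
qed

lemma orbit_sym:
  assumes "(f^^p) x = x" "0 < p" "y \<in> orbit f x" shows "x \<in> orbit f y"
proof -
  obtain k where y: "y = (f^^k) x" using assms(3) unfolding orbit_def by blast
  have "(f^^((p-1)*k)) y = (f^^((p-1)*k + k)) x" by (simp add: y funpow_add)
  also have "(p-1)*k + k = p*k" using assms(2) by (cases p) auto
  also have "(f^^(p*k)) x = x" using periodic_mult[OF assms(1)] by simp
  finally show ?thesis unfolding orbit_def by blast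
qed

lemma orbit_eq:
  assumes "finite S" "inj_on f S" "f ` S \<subseteq> S" "x \<in> S" "y \<in> orbit f x"
  shows "orbit f y = orbit f x"
proof -
  obtain p where p: "p > 0" "(f^^p) x = x" using periodic_ex[OF assms(1-4)] by blast
  have xy: "x \<in> orbit f y" by (rule orbit_sym[OF p(2) p(1) assms(5)])
  show ?thesis by (rule antisym[OF orbit_trans[OF assms(5)] orbit_trans[OF xy]])
qed

lemma orbit_card4:
  assumes "inj_on f S" "f ` S \<subseteq> S" "x \<in> S" "card (orbit f x) = 4"
  shows "(f^^4) x = x"
proof -
  let ?h = "\<lambda>k. (f^^k) x"
  have fin: "finite (orbit f x)" using assms(4) card.infinite by force
  have "\<not> inj_on ?h {..4::nat}"
  proof
    assume "inj_on ?h {..4::nat}"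
    moreover have "?h ` {..4} \<subseteq> orbit f x" unfolding orbit_def by blast
    ultimately have "card {..4::nat} \<le> card (orbit f x)" using card_inj_on_le[OF _ _ fin] by blast
    then show False using assms(4) by simp
  qed
  then obtain i j where ij: "i \<noteq> j" "?h i = ?h j" "i \<le> 4" "j \<le> 4" unfolding inj_on_def by blast
  have "\<exists>q>0. q \<le> 4 \<and> (f^^q) x = x"
  proof (cases "i < j")
    case True
    then show ?thesis using funpow_cancel[OF assms(1,2,3) True] ij by (intro exI[of _ "j-i"]) auto
  next
    case False
    then have "j < i" using ij by simp
    then show ?thesis using funpow_cancel[OF assms(1,2,3) \<open>j<i\<close>] ij by (intro exI[of _ "i-j"]) auto
  qed
  then obtain q where q: "q > 0" "q \<le> 4" "(f^^q) x = x" by blast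
  have "4 \<le> q" using orbit_card_le[OF q(3,1)] assms(4) by simp
  then show ?thesis using q by (metis le_antisym)
qed



lemma sm_facts:
  assumes "sphere_map G"
  shows "finite (darts G)" "fphi G ` darts G \<subseteq> darts G" "inj_on (fphi G) (darts G)"
    "drev G ` darts G \<subseteq> darts G" "\<And>d. d \<in> darts G \<Longrightarrow> drev G (drev G d) = d"
    "\<And>d. d \<in> darts G \<Longrightarrow> dtail G (fphi G d) = dhead G d"
    "inj_on (drev G) (darts G)"
proof -
  have rv: "bij_betw (drev G) (darts G) (darts G)" and rt: "bij_betw (drot G) (darts G) (darts G)"
    and inv: "\<forall>d\<in>darts G. drev G (drev G d) = d"
    and tl: "\<forall>d\<in>darts G. dtail G (drot G d) = dtail G d"
    using assms unfolding sphere_map_def by auto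
  show "finite (darts G)" using assms unfolding sphere_map_def by auto
  show "fphi G ` darts G \<subseteq> darts G" using rv rt unfolding fphi_def bij_betw_def by auto
  have "inj_on (drot G \<circ> drev G) (darts G)"
    using rv rt unfolding bij_betw_def by (auto intro: comp_inj_on)
  then show "inj_on (fphi G) (darts G)" unfolding fphi_def comp_def .
  show "drev G ` darts G \<subseteq> darts G" using rv unfolding bij_betw_def by auto
  show "\<And>d. d \<in> darts G \<Longrightarrow> drev G (drev G d) = d" using inv by auto
  show "\<And>d. d \<in> darts G \<Longrightarrow> dtail G (fphi G d) = dhead G d"
    using tl rv unfolding fphi_def dhead_def bij_betw_def by auto
  show "inj_on (drev G) (darts G)" using rv unfolding bij_betw_def by auto
qed

lemma cell_sub:
  assumes "sphere_map G" "c \<in> cells G" shows "c \<subseteq> darts G"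
proof -
  obtain z where z: "z \<in> darts G" "c = orbit (fphi G) z" using assms(2) unfolding cells_def by blast
  show ?thesis using z funpow_in[OF sm_facts(2)[OF assms(1)]] unfolding orbit_def by blast
qed

lemma cell_orbit:
  assumes "sphere_map G" "c \<in> cells G" "x \<in> c" shows "c = orbit (fphi G) x"
proof -
  obtain z where z: "z \<in> darts G" "c = orbit (fphi G) z" using assms(2) unfolding cells_def by blast
  show ?thesis using orbit_eq[OF sm_facts(1,3,2)[OF assms(1)] z(1)] z(2) assms(3) by simp
qed

lemma cell_closed:
  assumes "sphere_map G" "c \<in> cells G" "x \<in> c" shows "fphi G x \<in> c"
  using cell_orbit[OF assms] orbit_step orbit_self by metis

lemma finite_cells: "sphere_map G \<Longrightarrow> finite (cells G)"
  unfolding cells_def using sm_facts(1) by blast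

lemma cell_finite: "sphere_map G \<Longrightarrow> c \<in> cells G \<Longrightarrow> finite c"
  using cell_sub sm_facts(1) finite_subset by metis

lemma A4_period:
  assumes "sphere_map G" "c \<in> cells G" "x \<in> c" "A4 G c"
  shows "(fphi G ^^ 4) x = x"
proof -
  have "card (orbit (fphi G) x) = 4" using assms cell_orbit unfolding typeA_def by metis
  then show ?thesis using orbit_card4[OF sm_facts(3,2)[OF assms(1)]] cell_sub assms by blast
qed

lemma inner_rev:
  assumes "sphere_map G" "x \<in> darts G" "inner_seg G x" shows "inner_seg G (drev G x)"
  using assms sm_facts(5)[OF assms(1,2)] unfolding inner_seg_def dhead_def by auto

definition tds :: "('n,'d,'e) drawing \<Rightarrow> 'd set list \<Rightarrow> 'd list \<Rightarrow> bool" where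
  "tds G cs ds \<longleftrightarrow> length ds = length cs - 1 \<and>
        (\<forall>i<length ds. ds ! i \<in> cs ! i \<and> drev G (ds ! i) \<in> cs ! Suc i \<and> inner_seg G (ds ! i)) \<and>
        (\<forall>i. 0 < i \<and> i < length cs - 1 \<longrightarrow>
            A4 G (cs ! i) \<and> ds ! i = fphi G (fphi G (drev G (ds ! (i - 1)))))"

lemma trail_tds: "trail G cs \<longleftrightarrow> length cs \<ge> 2 \<and> set cs \<subseteq> cells G \<and>
     \<not> A4 G (hd cs) \<and> \<not> A4 G (last cs) \<and> (\<exists>ds. tds G cs ds)"
  unfolding trail_def tds_def by blast

lemma trail_rev:
  assumes sm: "sphere_map G" and tr: "trail G cs" shows "trail G (rev cs)"
proof -
  obtain ds where ds: "tds G cs ds" using tr trail_tds by blast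
  define n where "n = length cs"
  have n2: "n \<ge> 2" and cells: "set cs \<subseteq> cells G" and hl: "\<not> A4 G (hd cs)" "\<not> A4 G (last cs)"
    using tr trail_tds n_def by auto
  have ld: "length ds = n - 1" using ds n_def tds_def by auto
  have d1: "\<And>i. i < n - 1 \<Longrightarrow> ds ! i \<in> cs ! i \<and> drev G (ds ! i) \<in> cs ! Suc i \<and> inner_seg G (ds ! i)"
    using ds ld unfolding tds_def by auto
  have d2: "\<And>i. 0 < i \<Longrightarrow> i < n - 1 \<Longrightarrow> A4 G (cs ! i) \<and> ds ! i = fphi G (fphi G (drev G (ds ! (i - 1))))"
    using ds n_def unfolding tds_def by auto
  have csc: "\<And>i. i < n \<Longrightarrow> cs ! i \<in> cells G" using cells n_def by auto
  have dd: "\<And>i. i < n - 1 \<Longrightarrow> ds ! i \<in> darts G"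
  proof -
    fix i assume i: "i < n - 1"
    then have "cs ! i \<in> cells G" using csc by simp
    then show "ds ! i \<in> darts G" using d1[OF i] cell_sub[OF sm] by blast
  qed
  define ds' where "ds' = rev (map (drev G) ds)"
  have ld': "length ds' = n - 1" using ds'_def ld by simp
  have ds'n: "\<And>i. i < n - 1 \<Longrightarrow> ds' ! i = drev G (ds ! (n - 2 - i))"
    unfolding ds'_def using ld by (simp add: rev_nth)
  have rc: "\<And>i. i < n \<Longrightarrow> rev cs ! i = cs ! (n - 1 - i)" using n_def by (simp add: rev_nth)
  have "tds G (rev cs) ds'"
    unfolding tds_def
  proof (intro conjI allI impI)
    show "length ds' = length (rev cs) - 1" using ld' n_def by simp
  next
    fix i assume i: "i < length ds'"
    let ?j = "n - 2 - i"
    have j: "?j < n - 1" using i ld' by auto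
    have e1: "ds' ! i = drev G (ds ! ?j)" using ds'n i ld' by simp
    have "Suc ?j = n - 1 - i" using i ld' by auto
    then show "ds' ! i \<in> rev cs ! i" using e1 d1[OF j] rc i ld' by auto
    have "drev G (ds' ! i) = ds ! ?j" using e1 sm_facts(5)[OF sm dd[OF j]] by simp
    moreover have "rev cs ! Suc i = cs ! ?j" using rc i ld' by (simp add: numeral_2_eq_2)
    ultimately show "drev G (ds' ! i) \<in> rev cs ! Suc i" using d1[OF j] by simp
    show "inner_seg G (ds' ! i)" using e1 inner_rev[OF sm dd[OF j]] d1[OF j] by simp
  next
    fix i assume i: "0 < i \<and> i < length (rev cs) - 1"
    define j where "j = n - 1 - i"
    have j: "0 < j" "j < n - 1" using i j_def n_def by auto
    have "i < n" using i n_def by auto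
    then have "rev cs ! i = cs ! j" using rc j_def by simp
    then show "A4 G (rev cs ! i)" using d2[OF j] by simp
    have jm: "j - 1 < n - 1" using j by simp
    have ii: "i < n - 1" "i - 1 < n - 1" using i n_def by auto
    have a1: "n - 2 - i = j - 1" using j_def by simp
    have a2: "n - 2 - (i - 1) = j" using j_def i n_def by simp
    have e1: "ds' ! i = drev G (ds ! (j - 1))" using ds'n[OF ii(1)] a1 by simp
    have e2: "drev G (ds' ! (i - 1)) = ds ! j"
    proof -
      have "ds' ! (i - 1) = drev G (ds ! j)" using ds'n[OF ii(2)] a2 by simp
      then show ?thesis using sm_facts(5)[OF sm dd[OF j(2)]] by simp
    qed
    let ?z = "drev G (ds ! (j - 1))"
    have zc: "?z \<in> cs ! j" using d1[OF jm] j by simp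
    have "(fphi G ^^ 4) ?z = ?z"
      using A4_period[OF sm csc zc] d2[OF j] j by simp
    then have "fphi G (fphi G (fphi G (fphi G ?z))) = ?z" by (simp add: numeral_eq_Suc)
    then show "ds' ! i = fphi G (fphi G (drev G (ds' ! (i - 1))))"
      using e1 e2 d2[OF j] by simp
  qed
  moreover have "length (rev cs) \<ge> 2" "set (rev cs) \<subseteq> cells G" "\<not> A4 G (hd (rev cs))" "\<not> A4 G (last (rev cs))"
    using n2 cells hl n_def by (auto simp: hd_rev last_rev)
  ultimately show ?thesis using trail_tds by blast
qed



lemma trail_unique_aux:
  assumes sm: "sphere_map G"
    and t1: "length cs \<ge> 2" "set cs \<subseteq> cells G" "\<not> A4 G (hd cs)" "tds G cs ds"
    and t2: "length cs' \<ge> 2" "set cs' \<subseteq> cells G" "tds G cs' ds'"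
    and le: "length cs \<le> length cs'"
    and ll: "last cs = last cs'" and ld: "last ds = last ds'"
  shows "cs = cs'"
proof -
  define n where "n = length cs"
  define m where "m = length cs'"
  have n2: "n \<ge> 2" and m2: "m \<ge> 2" and nm: "n \<le> m" using t1 t2 le n_def m_def by auto
  have len: "length ds = n - 1" "length ds' = m - 1" using t1(4) t2(3) n_def m_def tds_def by auto
  have d1: "\<And>i. i < n - 1 \<Longrightarrow> ds ! i \<in> cs ! i"
    using t1(4) len unfolding tds_def by auto
  have d1': "\<And>i. i < m - 1 \<Longrightarrow> ds' ! i \<in> cs' ! i"
    using t2(3) len unfolding tds_def by auto
  have d2: "\<And>i. 0 < i \<Longrightarrow> i < n - 1 \<Longrightarrow> ds ! i = fphi G (fphi G (drev G (ds ! (i - 1))))"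
    using t1(4) n_def unfolding tds_def by auto
  have d2': "\<And>i. 0 < i \<Longrightarrow> i < m - 1 \<Longrightarrow> A4 G (cs' ! i) \<and> ds' ! i = fphi G (fphi G (drev G (ds' ! (i - 1))))"
    using t2(3) m_def unfolding tds_def by auto
  have csc: "\<And>i. i < n \<Longrightarrow> cs ! i \<in> cells G" using t1(2) n_def by auto
  have csc': "\<And>i. i < m \<Longrightarrow> cs' ! i \<in> cells G" using t2(2) m_def by auto
  have dd: "\<And>i. i < n - 1 \<Longrightarrow> ds ! i \<in> darts G"
  proof -
    fix i assume i: "i < n - 1"
    then have "cs ! i \<in> cells G" using csc by simp
    then show "ds ! i \<in> darts G" using d1[OF i] cell_sub[OF sm] by blast
  qed
  have dd': "\<And>i. i < m - 1 \<Longrightarrow> ds' ! i \<in> darts G"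
  proof -
    fix i assume i: "i < m - 1"
    then have "cs' ! i \<in> cells G" using csc' by simp
    then show "ds' ! i \<in> darts G" using d1'[OF i] cell_sub[OF sm] by blast
  qed
  have injf: "inj_on (fphi G) (darts G)" and fmap: "fphi G ` darts G \<subseteq> darts G"
    and injr: "inj_on (drev G) (darts G)" and rmap: "drev G ` darts G \<subseteq> darts G"
    using sm_facts[OF sm] by auto
  have key: "\<And>k. k < n - 1 \<Longrightarrow> ds ! (n - 2 - k) = ds' ! (m - 2 - k)"
  proof -
    fix k show "k < n - 1 \<Longrightarrow> ds ! (n - 2 - k) = ds' ! (m - 2 - k)"
    proof (induction k)
      case 0
      have "ds \<noteq> []" "ds' \<noteq> []" using len n2 m2 by auto
      then have "last ds = ds ! (n - 2)" "last ds' = ds' ! (m - 2)"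
        using len by (auto simp: last_conv_nth numeral_2_eq_2)
      then show ?case using ld by simp
    next
      case (Suc k)
      define i where "i = n - 2 - k"
      define i' where "i' = m - 2 - k"
      have ii: "0 < i" "i < n - 1" "0 < i'" "i' < m - 1" using Suc.prems nm i_def i'_def by auto
      have IH: "ds ! i = ds' ! i'" using Suc i_def i'_def by simp
      have a: "ds ! (i - 1) \<in> darts G" "ds' ! (i' - 1) \<in> darts G" using dd dd' ii by auto
      have ra: "drev G (ds ! (i - 1)) \<in> darts G" "drev G (ds' ! (i' - 1)) \<in> darts G" using a rmap by auto
      have fa: "fphi G (drev G (ds ! (i - 1))) \<in> darts G" "fphi G (drev G (ds' ! (i' - 1))) \<in> darts G"
        using ra fmap by auto
      have "fphi G (fphi G (drev G (ds ! (i - 1)))) = fphi G (fphi G (drev G (ds' ! (i' - 1))))"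
        using IH d2[OF ii(1,2)] d2'[OF ii(3,4)] by simp
      then have "fphi G (drev G (ds ! (i - 1))) = fphi G (drev G (ds' ! (i' - 1)))"
        using inj_onD[OF injf _ fa] by blast
      then have "drev G (ds ! (i - 1)) = drev G (ds' ! (i' - 1))"
        using inj_onD[OF injf _ ra] by blast
      then have "ds ! (i - 1) = ds' ! (i' - 1)"
        using inj_onD[OF injr _ a] by blast
      moreover have "i - 1 = n - 2 - Suc k" "i' - 1 = m - 2 - Suc k" using i_def i'_def by auto
      ultimately show ?case by simp
    qed
  qed
  have cseq: "\<And>j. j < n \<Longrightarrow> cs ! j = cs' ! (j + (m - n))"
  proof -
    fix j assume j: "j < n"
    show "cs ! j = cs' ! (j + (m - n))"
    proof (cases "j = n - 1")
      case True
      have "cs \<noteq> []" "cs' \<noteq> []" using n2 m2 n_def m_def by auto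
      then have "last cs = cs ! (n - 1)" "last cs' = cs' ! (m - 1)"
        using n_def m_def by (auto simp: last_conv_nth)
      moreover have "j + (m - n) = m - 1" using True nm n2 by simp
      ultimately show ?thesis using ll True by simp
    next
      case False
      then have jn: "j < n - 1" using j by simp
      define k where "k = n - 2 - j"
      have k: "k < n - 1" "n - 2 - k = j" "m - 2 - k = j + (m - n)" using jn k_def nm by auto
      have eq: "ds ! j = ds' ! (j + (m - n))" using key[OF k(1)] k by simp
      have jm: "j + (m - n) < m - 1" using jn nm by simp
      have "cs ! j = orbit (fphi G) (ds ! j)" using cell_orbit[OF sm csc d1[OF jn]] j by simp
      moreover have "cs' ! (j + (m - n)) = orbit (fphi G) (ds' ! (j + (m - n)))"
        using cell_orbit[OF sm csc' d1'[OF jm]] jm by simp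
      ultimately show ?thesis using eq by simp
    qed
  qed
  have "m = n"
  proof (rule ccontr)
    assume "m \<noteq> n"
    then have "0 < m - n" "m - n < m - 1" using nm n2 by auto
    then have "A4 G (cs' ! (m - n))" using d2' by blast
    moreover have "hd cs = cs ! 0" using n2 n_def by (intro hd_conv_nth) auto
    ultimately show False using cseq[of 0] n2 t1(3) by simp
  qed
  then show ?thesis using cseq n_def m_def by (auto intro: nth_equalityI)
qed

lemma trail_unique:
  assumes sm: "sphere_map G" and tr: "trail G cs" "trail G cs'"
    and ds: "tds G cs ds" "tds G cs' ds'"
    and ll: "last cs = last cs'" and ld: "last ds = last ds'"
  shows "cs = cs'"
proof (cases "length cs \<le> length cs'")
  case True
  then show ?thesis using trail_unique_aux[OF sm _ _ _ ds(1) _ _ ds(2) True ll ld] tr trail_tds by blast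
next
  case False
  then show ?thesis using trail_unique_aux[OF sm _ _ _ ds(2) _ _ ds(1) _ ll[symmetric] ld[symmetric]] tr trail_tds
    by (metis nle_le)
qed

definition Trails :: "('n,'d,'e) drawing \<Rightarrow> 'd set \<Rightarrow> 'd set list set" where
  "Trails G c = {cs. trail G cs \<and> last cs = c}"

definition ninner :: "('n,'d,'e) drawing \<Rightarrow> 'd set \<Rightarrow> nat" where
  "ninner G c = card {d \<in> c. inner_seg G d}"

lemma trails_bound:
  assumes sm: "sphere_map G" and c: "c \<in> cells G"
  shows "finite (Trails G c) \<and> card (Trails G c) \<le> ninner G c"
proof -
  define g where "g cs = drev G (last (SOME ds. tds G cs ds))" for cs
  have gprop: "g cs \<in> {d \<in> c. inner_seg G d} \<and> (\<exists>ds. tds G cs ds \<and> g cs = drev G (last ds))"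
    if cs: "cs \<in> Trails G c" for cs
  proof -
    have tr: "trail G cs" "last cs = c" using cs unfolding Trails_def by auto
    then have "\<exists>ds. tds G cs ds" using trail_tds by blast
    then have dsS: "tds G cs (SOME ds. tds G cs ds)" by (rule someI_ex)
    define ds where "ds = (SOME ds. tds G cs ds)"
    have ds: "tds G cs ds" using dsS ds_def by simp
    define n where "n = length cs"
    have n2: "n \<ge> 2" using tr trail_tds n_def by auto
    have len: "length ds = n - 1" using ds n_def tds_def by auto
    have ne: "ds \<noteq> []" using len n2 by auto
    have lst: "last ds = ds ! (n - 2)" using ne len by (simp add: last_conv_nth numeral_2_eq_2)
    have nl: "n - 2 < length ds" using len n2 by simp
    have p: "ds ! (n-2) \<in> cs ! (n-2) \<and> drev G (ds ! (n-2)) \<in> cs ! Suc (n-2) \<and> inner_seg G (ds ! (n-2))"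
      using ds nl unfolding tds_def by blast
    have sn: "Suc (n-2) = length cs - 1" using n2 n_def by simp
    have "cs \<noteq> []" using n2 n_def by auto
    then have "cs ! Suc (n-2) = c" using tr(2) sn by (simp add: last_conv_nth)
    moreover have "cs ! (n-2) \<in> cells G"
    proof -
      have "n - 2 < length cs" using n2 n_def by simp
      then have "cs ! (n-2) \<in> set cs" by (rule nth_mem)
      moreover have "set cs \<subseteq> cells G" using tr(1) trail_tds by blast
      ultimately show ?thesis by blast
    qed
    ultimately have "ds ! (n-2) \<in> darts G" using p cell_sub[OF sm] by blast
    then have "inner_seg G (drev G (ds ! (n-2)))" using inner_rev[OF sm] p by blast
    moreover have "g cs = drev G (last ds)" using g_def ds_def by simp
    ultimately show ?thesis using p lst ds \<open>cs ! Suc (n-2) = c\<close> by auto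
  qed
  have inj: "inj_on g (Trails G c)"
  proof (rule inj_onI)
    fix cs cs' assume a: "cs \<in> Trails G c" "cs' \<in> Trails G c" "g cs = g cs'"
    obtain ds where ds: "tds G cs ds" "g cs = drev G (last ds)" using gprop[OF a(1)] by blast
    obtain ds' where ds': "tds G cs' ds'" "g cs' = drev G (last ds')" using gprop[OF a(2)] by blast
    have tr: "trail G cs" "trail G cs'" "last cs = c" "last cs' = c" using a unfolding Trails_def by auto
    have lin: "last ds \<in> darts G" "last ds' \<in> darts G"
    proof -
      have "length ds = length cs - 1" using ds(1) unfolding tds_def by blast
      moreover have "length cs \<ge> 2" using tr(1) unfolding trail_tds by blast
      ultimately have ne: "ds \<noteq> []" by auto
      then have "last ds \<in> set ds" by simp
      then obtain i where i: "i < length ds" "last ds = ds ! i" by (metis in_set_conv_nth)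
      then have "ds ! i \<in> cs ! i" "i < length cs" using ds(1) unfolding tds_def by auto
      moreover have "cs ! i \<in> cells G" using tr(1) trail_tds nth_mem[OF \<open>i < length cs\<close>] by blast
      ultimately show "last ds \<in> darts G" using i cell_sub[OF sm] by auto
    next
      have "length ds' = length cs' - 1" using ds'(1) unfolding tds_def by blast
      moreover have "length cs' \<ge> 2" using tr(2) unfolding trail_tds by blast
      ultimately have ne: "ds' \<noteq> []" by auto
      then have "last ds' \<in> set ds'" by simp
      then obtain i where i: "i < length ds'" "last ds' = ds' ! i" by (metis in_set_conv_nth)
      then have "ds' ! i \<in> cs' ! i" "i < length cs'" using ds'(1) unfolding tds_def by auto
      moreover have "cs' ! i \<in> cells G" using tr(2) trail_tds nth_mem[OF \<open>i < length cs'\<close>] by blast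
      ultimately show "last ds' \<in> darts G" using i cell_sub[OF sm] by auto
    qed
    have "last ds = last ds'" using inj_onD[OF sm_facts(7)[OF sm] _ lin] ds ds' a(3) by simp
    then show "cs = cs'" using trail_unique[OF sm tr(1,2) ds(1) ds'(1)] tr by simp
  qed
  have sub: "g ` Trails G c \<subseteq> {d \<in> c. inner_seg G d}" using gprop by blast
  have fin: "finite {d \<in> c. inner_seg G d}" using cell_finite[OF sm c] by simp
  show ?thesis unfolding ninner_def using inj_on_finite[OF inj sub fin] card_inj_on_le[OF inj sub fin] by simp
qed



lemma U6_inner:
  assumes sm: "sphere_map G" and c: "c \<in> cells G" and u: "U6 G c"
  shows "ninner G c \<le> 1"
proof -
  let ?f = "fphi G"
  obtain d where d: "d \<in> c" "dtail G d \<in> dverts G" "dhead G d \<in> dverts G"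
    using u unfolding U6_def by blast
  have c4: "card c = 4" using u unfolding U6_def by blast
  have co: "c = orbit ?f d" using cell_orbit[OF sm c d(1)] .
  have dD: "d \<in> darts G" using d(1) cell_sub[OF sm c] by blast
  have p4: "(?f ^^ 4) d = d"
    using orbit_card4[OF sm_facts(3,2)[OF sm] dD] co c4 by simp
  define a where "a = ?f d"
  define y where "y = ?f (?f (?f d))"
  have ac: "a \<in> c" using cell_closed[OF sm c d(1)] a_def by simp
  have yc: "y \<in> c" using cell_closed[OF sm c] d(1) y_def by simp
  have fy: "?f y = d" using p4 y_def by (simp add: numeral_eq_Suc)
  have yD: "y \<in> darts G" using yc cell_sub[OF sm c] by blast
  have ta: "dtail G a \<in> dverts G" using sm_facts(6)[OF sm dD] d(3) a_def by simp
  have hy: "dhead G y \<in> dverts G" using sm_facts(6)[OF sm yD] fy d(2) by simp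
  have cle: "\<And>k. 0 < k \<Longrightarrow> (?f ^^ k) d = d \<Longrightarrow> 4 \<le> k"
    using orbit_card_le co c4 by metis
  have "a \<noteq> d"
  proof
    assume "a = d" then have "(?f ^^ 1) d = d" using a_def by simp
    then show False using cle[of 1] by simp
  qed
  have "y \<noteq> d"
  proof
    assume "y = d" then have "(?f ^^ 3) d = d" using y_def by (simp add: numeral_eq_Suc)
    then show False using cle[of 3] by simp
  qed
  have "y \<noteq> a"
  proof
    assume "y = a"
    then have "?f (?f (?f d)) = ?f d" using y_def a_def by simp
    moreover have "?f (?f d) \<in> darts G" using sm_facts(2)[OF sm] dD by blast
    ultimately have "?f (?f d) = d" using inj_onD[OF sm_facts(3)[OF sm]] dD by blast
    then have "(?f ^^ 2) d = d" by (simp add: numeral_eq_Suc)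
    then show False using cle[of 2] by simp
  qed
  have sub: "{x \<in> c. inner_seg G x} \<subseteq> c - {d, a, y}"
    using d ta hy unfolding inner_seg_def crossings_def by auto
  have fc: "finite c" using cell_finite[OF sm c] .
  have "card {d, a, y} = 3" using \<open>a \<noteq> d\<close> \<open>y \<noteq> d\<close> \<open>y \<noteq> a\<close> by auto
  moreover have "{d, a, y} \<subseteq> c" using d(1) ac yc by auto
  ultimately have "card (c - {d, a, y}) = 1" using c4 card_Diff_subset[of "{d,a,y}" c] by simp
  then show ?thesis unfolding ninner_def using card_mono[OF _ sub] fc by simp
qed

lemma inner_le_csize:
  assumes sm: "sphere_map G" and c: "c \<in> cells G"
  shows "ninner G c \<le> csize G c"
proof -
  have "ninner G c \<le> card c" unfolding ninner_def using cell_finite[OF sm c] by (intro card_mono) auto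
  then show ?thesis unfolding csize_def by simp
qed

lemma tau_le:
  assumes sm: "sphere_map G"
    and fin: "finite {cs. trail G cs \<and> T G (hd cs) \<and> Lc G (last cs)}"
  shows "tau G T Lc \<le> card {cs. trail G cs \<and> T G (hd cs) \<and> Lc G (last cs)}"
proof -
  let ?Y = "{cs. trail G cs \<and> T G (hd cs) \<and> Lc G (last cs)}"
  have "{{cs, rev cs} | cs. trail G cs \<and>
      ((T G (hd cs) \<and> Lc G (last cs)) \<or> (Lc G (hd cs) \<and> T G (last cs)))}
      \<subseteq> (\<lambda>cs. {cs, rev cs}) ` ?Y"
  proof
    fix X assume "X \<in> {{cs, rev cs} | cs. trail G cs \<and>
      ((T G (hd cs) \<and> Lc G (last cs)) \<or> (Lc G (hd cs) \<and> T G (last cs)))}"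
    then obtain cs where cs: "X = {cs, rev cs}" "trail G cs"
      "(T G (hd cs) \<and> Lc G (last cs)) \<or> (Lc G (hd cs) \<and> T G (last cs))" by blast
    show "X \<in> (\<lambda>cs. {cs, rev cs}) ` ?Y"
    proof (cases "T G (hd cs) \<and> Lc G (last cs)")
      case True then show ?thesis using cs by blast
    next
      case False
      then have h: "Lc G (hd cs)" "T G (last cs)" using cs by auto
      have ne: "cs \<noteq> []" using cs(2) unfolding trail_tds by auto
      have "rev cs \<in> ?Y" using trail_rev[OF sm cs(2)] h ne by (simp add: hd_rev last_rev)
      moreover have "X = {rev cs, rev (rev cs)}" using cs(1) by auto
      ultimately show ?thesis by blast
    qed
  qed
  then have "tau G T Lc \<le> card ((\<lambda>cs. {cs, rev cs}) ` ?Y)"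
    unfolding tau_def using fin by (intro card_mono) auto
  also have "\<dots> \<le> card ?Y" by (rule card_image_le[OF fin])
  finally show ?thesis .
qed



lemma A3_nvert: assumes "A3 G c" shows "nvert G c = 0"
proof -
  have "{d \<in> c. dtail G d \<in> dverts G} = {}" using assms unfolding typeA_def crossings_def by auto
  then show ?thesis unfolding nvert_def by (simp only: card.empty)
qed

theorem mainTheorem4:
  fixes G :: "('n, 'd, 'e) drawing"
  assumes "three_saturated G"
  shows "(\<Sum>a\<in>{a. 6 \<le> a \<and> cells_of_size G a \<noteq> {}}. a * card (cells_of_size G a))
           \<ge> tau G B4 Lc + tau G B5 Lc + tau G A3 Lc + tau G A5 Lc + 5 * Ncount G U6"
proof -
  have sm: "sphere_map G" using assms unfolding three_saturated_def drawing_def by blast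
  define L where "L = {c \<in> cells G. Lc G c}"
  have finL: "finite L" using finite_cells[OF sm] L_def by simp
  have Lc: "\<And>c. c \<in> L \<Longrightarrow> c \<in> cells G" using L_def by simp
  define I where "I = {a. 6 \<le> a \<and> cells_of_size G a \<noteq> {}}"
  have finI: "finite I"
  proof (rule finite_subset)
    show "I \<subseteq> csize G ` cells G" unfolding I_def cells_of_size_def by auto
    show "finite (csize G ` cells G)" using finite_cells[OF sm] by simp
  qed
  have img: "csize G ` L \<subseteq> I" unfolding I_def L_def Lc_def cells_of_size_def by auto
  have lhs: "(\<Sum>a\<in>I. a * card (cells_of_size G a)) = (\<Sum>c\<in>L. csize G c)"
  proof -
    have "(\<Sum>a\<in>I. a * card (cells_of_size G a)) = (\<Sum>a\<in>I. sum (csize G) {x. x \<in> L \<and> csize G x = a})"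
    proof (rule sum.cong[OF refl])
      fix a assume a: "a \<in> I"
      have eq: "{x. x \<in> L \<and> csize G x = a} = cells_of_size G a"
        using a unfolding I_def L_def Lc_def cells_of_size_def by auto
      have "sum (csize G) (cells_of_size G a) = sum (\<lambda>_. a) (cells_of_size G a)"
        unfolding cells_of_size_def by (rule sum.cong) auto
      then show "a * card (cells_of_size G a) = sum (csize G) {x. x \<in> L \<and> csize G x = a}"
        using eq by simp
    qed
    also have "\<dots> = (\<Sum>c\<in>L. csize G c)" by (rule sum.group[OF finL finI img])
    finally show ?thesis .
  qed
  have trfin: "\<And>c. c \<in> L \<Longrightarrow> finite (Trails G c)" using trails_bound[OF sm] Lc by blast
  let ?U = "\<Union>c\<in>L. Trails G c"
  have finU: "finite ?U" using finL trfin by blast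
  define Y where "Y T = {cs. trail G cs \<and> T G (hd cs) \<and> Lc G (last cs)}" for T :: "('n,'d,'e) drawing \<Rightarrow> 'd set \<Rightarrow> bool"
  have YU: "Y T \<subseteq> ?U" for T
  proof
    fix cs assume "cs \<in> Y T"
    then have cs: "trail G cs" "Lc G (last cs)" unfolding Y_def by auto
    then have "cs \<noteq> []" "set cs \<subseteq> cells G" unfolding trail_tds by auto
    then have "last cs \<in> cells G" by auto
    then have "last cs \<in> L" using cs L_def by simp
    then show "cs \<in> ?U" using cs unfolding Trails_def by blast
  qed
  have finY: "finite (Y T)" for T using YU finU finite_subset by metis
  have tl: "tau G T Lc \<le> card (Y T)" for T using tau_le[OF sm] finY unfolding Y_def by blast
  have dis: "Y B4 \<inter> Y B5 = {}" "(Y B4 \<union> Y B5) \<inter> Y A3 = {}" "(Y B4 \<union> Y B5 \<union> Y A3) \<inter> Y A5 = {}"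
    unfolding Y_def B4_def B5_def typeA_def using A3_nvert unfolding typeA_def by fastforce+
  have "card (Y B4 \<union> Y B5 \<union> Y A3 \<union> Y A5) = card (Y B4) + card (Y B5) + card (Y A3) + card (Y A5)"
    using dis finY by (simp add: card_Un_disjoint)
  moreover have "card (Y B4 \<union> Y B5 \<union> Y A3 \<union> Y A5) \<le> card ?U"
    using YU finU by (intro card_mono) auto
  moreover have "card ?U \<le> (\<Sum>c\<in>L. card (Trails G c))" by (rule card_UN_le[OF finL])
  moreover have "(\<Sum>c\<in>L. card (Trails G c)) \<le> (\<Sum>c\<in>L. ninner G c)"
    using trails_bound[OF sm] Lc by (intro sum_mono) blast
  ultimately have T1: "tau G B4 Lc + tau G B5 Lc + tau G A3 Lc + tau G A5 Lc \<le> (\<Sum>c\<in>L. ninner G c)"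
    using tl[of B4] tl[of B5] tl[of A3] tl[of A5] by linarith
  have U6L: "{c \<in> cells G. U6 G c} = {c \<in> L. U6 G c}"
    unfolding L_def Lc_def U6_def csize_def nvert_def by auto
  have "5 * Ncount G U6 = (\<Sum>c\<in>{c \<in> L. U6 G c}. 5)" unfolding Ncount_def U6L by simp
  also have "\<dots> = (\<Sum>c\<in>L. if U6 G c then 5 else 0)" by (rule sum.inter_filter[OF finL])
  finally have T2: "5 * Ncount G U6 = (\<Sum>c\<in>L. if U6 G c then 5 else 0)" .
  have "(\<Sum>c\<in>L. ninner G c) + (\<Sum>c\<in>L. if U6 G c then 5 else 0) = (\<Sum>c\<in>L. ninner G c + (if U6 G c then 5 else 0))"
    by (simp add: sum.distrib)
  also have "\<dots> \<le> (\<Sum>c\<in>L. csize G c)"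
  proof (rule sum_mono)
    fix c assume c: "c \<in> L"
    show "ninner G c + (if U6 G c then 5 else 0) \<le> csize G c"
    proof (cases "U6 G c")
      case True
      have "csize G c = 6" using True unfolding U6_def csize_def nvert_def by simp
      then show ?thesis using U6_inner[OF sm Lc[OF c] True] True by simp
    next
      case False
      then show ?thesis using inner_le_csize[OF sm Lc[OF c]] by simp
    qed
  qed
  finally have T3: "(\<Sum>c\<in>L. ninner G c) + (\<Sum>c\<in>L. if U6 G c then 5 else 0) \<le> (\<Sum>c\<in>L. csize G c)" .
  show ?thesis unfolding I_def[symmetric] using T1 T2 T3 lhs by linarith
qed

end
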